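(* For every standard allocation rule $f$, the mechanism $\mathrm{Truthful}(f)$ is individually rational, truthful and budget feasible. Precisely, for every instance and every seller $i$: (a) $P_{i,r_i}(c_i)\ge c_if_{r_i}(c_i/u_i)$; (b) for every report $\bar c_i\ge0$, $P_{i,r_i}(\bar c_i)-c_if_{r_i}(\bar c_i/u_i)\le P_{i,r_i}(c_i)-c_if_{r_i}(c_i/u_i)$, where $r_i$ depends only on the other sellers' costs; and (c) $\sum_{i\in S}P_{i,r_i}(c_i)\le B$.
   Context: Setting: a buyer with budget $B>0$ faces a finite set $S$ of sellers; seller $i$ owns one divisible item giving utility $u_i>0$ and has private cost $c_i\ge0$; buying fraction $x_i\in[0,1]$ costs $x_ic_i$. A standard allocation rule is a non-increasing $f:[0,\infty)\to[0,1]$ with $f(0)=1$, $f(e-1)=0$. For $r>0$: $f_r(x)=f(x/r)$, $Q_r(x)=xf_r(x)+\int_x^\infty f_r(y)\,dy$, $P_{i,r}(x)=u_iQ_r(x/u_i)$. $\mathrm{EnvyFree}(f)$ on cost vector $c$ has stopping rate the value at which, decreasing $r$ from $\infty$, the nondecreasing function $r\mapsto\sum_iP_{i,r}(c_i)$ first equals $B$. $\mathrm{Truthful}(f)$ on reported costs $c$: for each $i$, $r_i$ is the stopping rate of $\mathrm{EnvyFree}(f)$ on the cost vector obtained from $c$ by setting the $i$-th cost to $0$ (so $r_i$ does not depend on $i$'s report); it buys $f_{r_i}(c_i/u_i)$ of item $i$ and pays $P_{i,r_i}(c_i)$ to seller $i$. *)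

theory Defs
  imports "HOL-Analysis.Analysis"
begin

definition standard_alloc :: "(real \<Rightarrow> real) \<Rightarrow> bool" where
  "standard_alloc f \<longleftrightarrow>
     (\<forall>x\<ge>0. 0 \<le> f x \<and> f x \<le> 1) \<and>
     (\<forall>x y. 0 \<le> x \<longrightarrow> x \<le> y \<longrightarrow> f y \<le> f x) \<and>
     f 0 = 1 \<and> f (exp 1 - 1) = 0"

definition f_r :: "(real \<Rightarrow> real) \<Rightarrow> real \<Rightarrow> real \<Rightarrow> real" where
  "f_r f r x = f (x / r)"

definition Q_r :: "(real \<Rightarrow> real) \<Rightarrow> real \<Rightarrow> real \<Rightarrow> real" where
  "Q_r f r x = x * f_r f r x + integral {x..} (f_r f r)"

definition P_ir :: "(real \<Rightarrow> real) \<Rightarrow> ('a \<Rightarrow> real) \<Rightarrow> 'a \<Rightarrow> real \<Rightarrow> real \<Rightarrow> real" where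
  "P_ir f u i r x = u i * Q_r f r (x / u i)"

definition total_pay :: "(real \<Rightarrow> real) \<Rightarrow> 'a set \<Rightarrow> ('a \<Rightarrow> real) \<Rightarrow> ('a \<Rightarrow> real) \<Rightarrow> real \<Rightarrow> real" where
  "total_pay f S u c r = (\<Sum>i\<in>S. P_ir f u i r (c i))"

text \<open>r is the stopping rate of EnvyFree(f) on c: decreasing r from infinity,
  r is the first value at which the total equals B, i.e. the total equals B at r
  and differs from B at every larger rate.\<close>
definition is_stopping_rate ::
  "(real \<Rightarrow> real) \<Rightarrow> 'a set \<Rightarrow> ('a \<Rightarrow> real) \<Rightarrow> real \<Rightarrow> ('a \<Rightarrow> real) \<Rightarrow> real \<Rightarrow> bool" where
  "is_stopping_rate f S u B c r \<longleftrightarrow>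
     0 < r \<and> total_pay f S u c r = B \<and> (\<forall>r'>r. total_pay f S u c r' \<noteq> B)"

definition stopping_rate ::
  "(real \<Rightarrow> real) \<Rightarrow> 'a set \<Rightarrow> ('a \<Rightarrow> real) \<Rightarrow> real \<Rightarrow> ('a \<Rightarrow> real) \<Rightarrow> real" where
  "stopping_rate f S u B c = (THE r. is_stopping_rate f S u B c r)"

definition truthful_rate ::
  "(real \<Rightarrow> real) \<Rightarrow> 'a set \<Rightarrow> ('a \<Rightarrow> real) \<Rightarrow> real \<Rightarrow> ('a \<Rightarrow> real) \<Rightarrow> 'a \<Rightarrow> real" where
  "truthful_rate f S u B c i = stopping_rate f S u B (c(i := 0))"

definition truthful_alloc ::
  "(real \<Rightarrow> real) \<Rightarrow> 'a set \<Rightarrow> ('a \<Rightarrow> real) \<Rightarrow> real \<Rightarrow> ('a \<Rightarrow> real) \<Rightarrow> 'a \<Rightarrow> real" where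
  "truthful_alloc f S u B c i = f_r f (truthful_rate f S u B c i) (c i / u i)"

definition truthful_pay ::
  "(real \<Rightarrow> real) \<Rightarrow> 'a set \<Rightarrow> ('a \<Rightarrow> real) \<Rightarrow> real \<Rightarrow> ('a \<Rightarrow> real) \<Rightarrow> 'a \<Rightarrow> real" where
  "truthful_pay f S u B c i = P_ir f u i (truthful_rate f S u B c i) (c i)"

end

theory Submission
  imports Defs
begin

locale gfun =
  fixes g :: "real \<Rightarrow> real" and M :: real
  assumes nn: "\<And>y. 0 \<le> y \<Longrightarrow> 0 \<le> g y"
    and anti: "\<And>y z. 0 \<le> y \<Longrightarrow> y \<le> z \<Longrightarrow> g z \<le> g y"
    and zero: "\<And>y. M \<le> y \<Longrightarrow> g y = 0"
    and M0: "0 \<le> M"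
begin

lemma int_ab: assumes "0 \<le> a" shows "g integrable_on {a..b}"
proof -
  have "mono_on {a..b} (\<lambda>y. - g y)"
    by (rule mono_onI) (use assms anti in auto)
  then have "(\<lambda>y. - g y) integrable_on {a..b}" by (rule integrable_on_mono_on)
  then have "(\<lambda>y. - (- g y)) integrable_on {a..b}" by (rule integrable_neg)
  then show ?thesis by simp
qed

lemma int_tail: assumes "0 \<le> x" "x \<le> K" "M \<le> K"
  shows "integral {x..} g = integral {x..K} g"
proof -
  have "(\<lambda>y. if y \<in> {x..} then g y else 0) = (\<lambda>y. if y \<in> {x..K} then g y else 0)"
    using zero assms by (auto simp: fun_eq_iff)
  then show ?thesis by (metis integral_restrict_UNIV)
qed

lemma int_diff: assumes "0 \<le> x" "x \<le> y"
  shows "integral {x..} g - integral {y..} g = integral {x..y} g"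
proof -
  define K where "K = max y M"
  have "integral {x..} g = integral {x..K} g" using assms by (intro int_tail) (auto simp: K_def)
  moreover have "integral {y..} g = integral {y..K} g" using assms by (intro int_tail) (auto simp: K_def)
  moreover have "integral {x..y} g + integral {y..K} g = integral {x..K} g"
    using Henstock_Kurzweil_Integration.integral_combine[where a=x and c=y and b=K and f=g] int_ab[of x K] assms by (auto simp: K_def)
  ultimately show ?thesis by linarith
qed

lemma int_bounds: assumes "0 \<le> x" "x \<le> y"
  shows "(y - x) * g y \<le> integral {x..y} g" "integral {x..y} g \<le> (y - x) * g x"
proof -
  have "integral {x..y} (\<lambda>t. g y) \<le> integral {x..y} g"
    using assms by (intro integral_le int_ab) (auto intro: anti)
  then show "(y - x) * g y \<le> integral {x..y} g" using assms by simp
  have "integral {x..y} g \<le> integral {x..y} (\<lambda>t. g x)"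
    using assms by (intro integral_le int_ab) (auto intro: anti)
  then show "integral {x..y} g \<le> (y - x) * g x" using assms by simp
qed

lemma incentive: assumes "0 \<le> x" "0 \<le> y"
  shows "(y - x) * g y + integral {y..} g \<le> integral {x..} g"
proof (cases "x \<le> y")
  case True
  from int_diff[OF assms(1) True] int_bounds[OF assms(1) True] show ?thesis by linarith
next
  case False
  then have yx: "y \<le> x" by simp
  have "(y - x) * g y = - ((x - y) * g y)" by (simp add: algebra_simps)
  with int_diff[OF assms(2) yx] int_bounds[OF assms(2) yx] show ?thesis by linarith
qed

lemma Q_anti: assumes "0 \<le> x" "x \<le> y"
  shows "y * g y + integral {y..} g \<le> x * g x + integral {x..} g"
proof -
  have "x * g y \<le> x * g x" using assms anti by (intro mult_left_mono) auto
  with incentive[of x y] assms show ?thesis by (simp add: algebra_simps)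
qed

lemma int_nonneg: assumes "0 \<le> x" shows "0 \<le> integral {x..} g"
proof -
  have "integral {x..} g = integral {x..max x M} g" using assms by (intro int_tail) auto
  also have "\<dots> \<ge> 0" using assms by (intro integral_nonneg int_ab) (auto intro: nn)
  finally show ?thesis .
qed

end

lemma int_mono2:
  assumes "gfun g M" "gfun h N" "\<And>y. 0 \<le> y \<Longrightarrow> g y \<le> h y" "0 \<le> x"
  shows "integral {x..} g \<le> integral {x..} h"
proof -
  define K where "K = max x (max M N)"
  have "integral {x..} g = integral {x..K} g"
    using assms gfun.int_tail[OF assms(1)] by (auto simp: K_def)
  moreover have "integral {x..} h = integral {x..K} h"
    using assms gfun.int_tail[OF assms(2)] by (auto simp: K_def)
  moreover have "integral {x..K} g \<le> integral {x..K} h"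
    using assms gfun.int_ab[OF assms(1)] gfun.int_ab[OF assms(2)] by (intro integral_le) auto
  ultimately show ?thesis by simp
qed

lemma std_gfun: assumes std: "standard_alloc f" and r: "0 < r"
  shows "gfun (f_r f r) (r * (exp 1 - 1))"
proof -
  have f1: "\<And>x. 0 \<le> x \<Longrightarrow> 0 \<le> f x" and f2: "\<And>x y. 0 \<le> x \<Longrightarrow> x \<le> y \<Longrightarrow> f y \<le> f x"
    and f4: "f (exp 1 - 1) = 0"
    using std unfolding standard_alloc_def by blast+
  have e: "0 \<le> exp 1 - (1::real)" by simp
  show ?thesis
  proof
    show "0 \<le> r * (exp 1 - 1)" using r e by simp
  next
    fix y :: real assume "0 \<le> y" then show "0 \<le> f_r f r y"
      unfolding f_r_def using r f1 by simp
  next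
    fix y z :: real assume "0 \<le> y" "y \<le> z"
    moreover have "y / r \<le> z / r" using calculation r by (simp add: divide_right_mono)
    ultimately show "f_r f r z \<le> f_r f r y"
      unfolding f_r_def using r f2 by simp
  next
    fix y :: real assume "r * (exp 1 - 1) \<le> y"
    then have a: "exp 1 - 1 \<le> y / r" using r by (simp add: field_simps)
    have "f (y / r) \<le> 0" using f2[OF e a] f4 by simp
    moreover have "0 \<le> f (y / r)" using f1 e a by (meson order_trans)
    ultimately show "f_r f r y = 0" unfolding f_r_def by simp
  qed
qed

lemma stop_unique:
  assumes "is_stopping_rate f S u B c r" "is_stopping_rate f S u B c r'"
  shows "r = r'"
  using assms unfolding is_stopping_rate_def by (metis linorder_neqE_linordered_idom)

lemma stop_eq: assumes "is_stopping_rate f S u B c r"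
  shows "stopping_rate f S u B c = r"
  unfolding stopping_rate_def using assms stop_unique by blast

lemma P_expand: assumes "0 < u i"
  shows "P_ir f u i r x = x * f_r f r (x / u i) + u i * integral {x / u i..} (f_r f r)"
  unfolding P_ir_def Q_r_def using assms by (simp add: algebra_simps)

lemma P_mono_r:
  assumes std: "standard_alloc f" and r: "0 < r" "r \<le> r'" and x: "0 \<le> x" and u: "0 < u i"
  shows "P_ir f u i r x \<le> P_ir f u i r' x"
proof -
  have f2: "\<And>x y. 0 \<le> x \<Longrightarrow> x \<le> y \<Longrightarrow> f y \<le> f x"
    using std unfolding standard_alloc_def by blast
  have r': "0 < r'" using r by simp
  have le: "f_r f r y \<le> f_r f r' y" if "0 \<le> y" for y
  proof -
    have "y / r' \<le> y / r" using that r by (simp add: frac_le)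
    moreover have "0 \<le> y / r'" using that r' by simp
    ultimately show ?thesis unfolding f_r_def using f2 by blast
  qed
  have y0: "0 \<le> x / u i" using x u by simp
  have "integral {x / u i..} (f_r f r) \<le> integral {x / u i..} (f_r f r')"
    by (rule int_mono2[OF std_gfun[OF std r(1)] std_gfun[OF std r'] le y0])
  then have "u i * integral {x / u i..} (f_r f r) \<le> u i * integral {x / u i..} (f_r f r')"
    using u by (simp add: mult_left_mono)
  moreover have "x * f_r f r (x / u i) \<le> x * f_r f r' (x / u i)"
    using le[OF y0] x by (simp add: mult_left_mono)
  ultimately show ?thesis using P_expand[where u=u and i=i, OF u] by simp
qed

lemma P_anti_c:
  assumes std: "standard_alloc f" and r: "0 < r" and x: "0 \<le> x" "x \<le> x'" and u: "0 < u i"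
  shows "P_ir f u i r x' \<le> P_ir f u i r x"
proof -
  interpret gfun "f_r f r" "r * (exp 1 - 1)" by (rule std_gfun[OF std r])
  have "x / u i \<le> x' / u i" using x u by (simp add: divide_right_mono)
  then have "(x' / u i) * f_r f r (x' / u i) + integral {x' / u i..} (f_r f r)
     \<le> (x / u i) * f_r f r (x / u i) + integral {x / u i..} (f_r f r)"
    using x u by (intro Q_anti) auto
  then have "u i * ((x' / u i) * f_r f r (x' / u i) + integral {x' / u i..} (f_r f r))
     \<le> u i * ((x / u i) * f_r f r (x / u i) + integral {x / u i..} (f_r f r))"
    using u by (simp add: mult_left_mono)
  then show ?thesis unfolding P_ir_def Q_r_def .
qed

theorem lemma2:
  fixes f :: "real \<Rightarrow> real" and S :: "'a set" and u c :: "'a \<Rightarrow> real" and B :: real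
  assumes std: "standard_alloc f"
    and fin: "finite S"
    and B: "B > 0"
    and u: "\<forall>i\<in>S. u i > 0"
    and c: "\<forall>i\<in>S. c i \<ge> 0"
    and wd: "\<forall>i\<in>S. \<exists>r. is_stopping_rate f S u B (c(i := 0)) r"
  shows "(\<forall>i\<in>S. truthful_pay f S u B c i \<ge> c i * truthful_alloc f S u B c i)
       \<and> (\<forall>i\<in>S. \<forall>cb \<ge> 0.
            truthful_pay f S u B (c(i := cb)) i - c i * truthful_alloc f S u B (c(i := cb)) i
              \<le> truthful_pay f S u B c i - c i * truthful_alloc f S u B c i)
       \<and> (\<Sum>i\<in>S. truthful_pay f S u B c i) \<le> B"
proof -
  obtain rr where rr: "\<And>i. i \<in> S \<Longrightarrow> is_stopping_rate f S u B (c(i := 0)) (rr i)"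
    using wd by metis
  have rpos: "\<And>i. i \<in> S \<Longrightarrow> 0 < rr i" using rr unfolding is_stopping_rate_def by blast
  have tr: "\<And>i cb. i \<in> S \<Longrightarrow> truthful_rate f S u B (c(i := cb)) i = rr i"
    unfolding truthful_rate_def fun_upd_upd by (rule stop_eq[OF rr])
  have tr0: "\<And>i. i \<in> S \<Longrightarrow> truthful_rate f S u B c i = rr i"
    using tr by (metis fun_upd_triv)
  have A: "\<forall>i\<in>S. truthful_pay f S u B c i \<ge> c i * truthful_alloc f S u B c i"
  proof
    fix i assume i: "i \<in> S"
    interpret gfun "f_r f (rr i)" "rr i * (exp 1 - 1)" by (rule std_gfun[OF std rpos[OF i]])
    have "0 \<le> u i * integral {c i / u i..} (f_r f (rr i))"
      using u c i by (intro mult_nonneg_nonneg int_nonneg) auto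
    then show "truthful_pay f S u B c i \<ge> c i * truthful_alloc f S u B c i"
      unfolding truthful_pay_def truthful_alloc_def tr0[OF i] P_expand[where u=u and i=i, OF u[rule_format, OF i]]
      by simp
  qed
  have Bp: "\<forall>i\<in>S. \<forall>cb \<ge> 0.
            truthful_pay f S u B (c(i := cb)) i - c i * truthful_alloc f S u B (c(i := cb)) i
              \<le> truthful_pay f S u B c i - c i * truthful_alloc f S u B c i"
  proof (intro ballI allI impI)
    fix i and cb :: real assume i: "i \<in> S" and cb: "0 \<le> cb"
    interpret gfun "f_r f (rr i)" "rr i * (exp 1 - 1)" by (rule std_gfun[OF std rpos[OF i]])
    have ui: "0 < u i" using u i by blast
    define x where "x = c i / u i"
    define y where "y = cb / u i"
    have x0: "0 \<le> x" using c i ui by (simp add: x_def)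
    have y0: "0 \<le> y" using cb ui by (simp add: y_def)
    have cx: "c i = u i * x" and cy: "cb = u i * y" using ui by (simp_all add: x_def y_def)
    have "u i * ((y - x) * f_r f (rr i) y + integral {y..} (f_r f (rr i)))
       \<le> u i * integral {x..} (f_r f (rr i))"
      using incentive[OF x0 y0] ui by (simp add: mult_left_mono)
    then show "truthful_pay f S u B (c(i := cb)) i - c i * truthful_alloc f S u B (c(i := cb)) i
              \<le> truthful_pay f S u B c i - c i * truthful_alloc f S u B c i"
      unfolding truthful_pay_def truthful_alloc_def tr0[OF i] tr[OF i] P_expand[where u=u and i=i, OF ui]
      by (simp add: x_def[symmetric] y_def[symmetric] cx cy algebra_simps)
  qed
  have C: "(\<Sum>i\<in>S. truthful_pay f S u B c i) \<le> B"
  proof (cases "S = {}")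
    case True then show ?thesis using B by simp
  next
    case False
    define R where "R = Max (rr ` S)"
    have "R \<in> rr ` S" unfolding R_def using fin False by simp
    then obtain i0 where i0: "i0 \<in> S" "rr i0 = R" by auto
    have Rge: "\<And>i. i \<in> S \<Longrightarrow> rr i \<le> R" unfolding R_def using fin by simp
    have "(\<Sum>i\<in>S. truthful_pay f S u B c i) = (\<Sum>i\<in>S. P_ir f u i (rr i) (c i))"
      unfolding truthful_pay_def using tr0 by simp
    also have "\<dots> \<le> (\<Sum>i\<in>S. P_ir f u i R (c i))"
      using u c rpos Rge by (intro sum_mono P_mono_r[OF std]) auto
    also have "\<dots> \<le> (\<Sum>i\<in>S. P_ir f u i R ((c(i0 := 0)) i))"
    proof (intro sum_mono)
      fix i assume i: "i \<in> S"
      show "P_ir f u i R (c i) \<le> P_ir f u i R ((c(i0 := 0)) i)"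
      proof (cases "i = i0")
        case True then show ?thesis using P_anti_c[OF std _ _ _, of R 0 "c i" u i] rpos[OF i0(1)] i0 u c i by auto
      next
        case False then show ?thesis by simp
      qed
    qed
    also have "\<dots> = B" using rr[OF i0(1)] i0 unfolding is_stopping_rate_def total_pay_def by simp
    finally show ?thesis .
  qed
  show ?thesis using A Bp C by blast
qed

end
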